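(* For every $\lambda\in\mathcal{R}$ and every convex overmarked box $\Theta$, the pair $(\pi(A_\Theta),\pi(B^\lambda_\Theta))$ (i.e. the representation $\rho^\lambda_\Theta$) is a smooth point of the real algebraic variety $\mathrm{Hom}(\Gamma_o,\mathrm{SL}(3,\mathbb{R}))=\{(A,B)\in\mathrm{SL}(3,\mathbb{R})^2: A^3=B^3=\mathrm{Id}\}$.
   Context: $\Gamma_o=\langle a,b\mid a^3=b^3=1\rangle$ (the index-2 subgroup of $\mathrm{PSL}(2,\mathbb{Z})$ generated by $R$ and $IRI$), and $\mathrm{PGL}(3,\mathbb{R})$ is identified with $\mathrm{SL}(3,\mathbb{R})$ via $\pi:\mathrm{GL}(3,\mathbb{R})\to\mathrm{SL}(3,\mathbb{R})$, $M\mapsto(\det M)^{-1/3}M$; a representation is identified with the pair of images of the generators, so $\mathrm{Hom}(\Gamma_o,\mathrm{SL}(3,\mathbb{R}))$ is the stated subvariety of $\mathrm{M}(3,\mathbb{R})^2$. A convex overmarked box $\Theta$ is determined, in a suitable basis, by parameters $(\zeta_t,\zeta_b)\in\,]-1,1[^2$ (namely, it consists of points $p=[-1:1:0]$, $q=[1:1:0]$, $r=[1:0:1]$, $s=[-1:0:1]$, $t=[\zeta_t:1:0]$, $b=[\zeta_b:0:1]$ and lines $P=ts$, $Q=tr$, $R=bq$, $S=bp$, $T=pq$, $B=rs$). Matrices: $A_\Theta=\begin{pmatrix}\zeta_t\zeta_b-1&\zeta_t(1-\zeta_t\zeta_b)&\zeta_b-\zeta_t\\ \zeta_b-\zeta_t&1-\zeta_t\zeta_b&\zeta_t\zeta_b-1\\0&1-\zeta_t^2&0\end{pmatrix}$,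 $D_\Theta=\begin{pmatrix}1&-\zeta_t&-\zeta_b\\-\zeta_t&1&\zeta_t\zeta_b\\-\zeta_b&\zeta_t\zeta_b&1\end{pmatrix}$, $\Sigma_{(\varepsilon,\delta)}=\begin{pmatrix}1&0&0\\0&e^{-\delta}\cosh\varepsilon&-\sinh\varepsilon\\0&-\sinh\varepsilon&e^{\delta}\cosh\varepsilon\end{pmatrix}$, and $B^\lambda_\Theta=\Sigma_\lambda^{-1}D_\Theta^{-1}\,{}^tA_\Theta^{-1}D_\Theta\Sigma_\lambda$. The representation $\rho^\lambda_\Theta$ corresponds to $(\pi(A_\Theta),\pi(B^\lambda_\Theta))$. $f(\varepsilon,\delta)=e^{-\delta}\cosh\varepsilon-\sinh\varepsilon-1$ and $\mathcal{R}=\{(\varepsilon,\delta):f(\varepsilon,\delta)\ge0,\ f(\varepsilon,-\delta)\ge0\}$. *)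

theory Defs
  imports "HOL-Analysis.Analysis"
begin

type_synonym mat3 = "real^3^3"

text \<open>Real polynomial functions in the coordinates (w.r.t. the standard basis).
  For the ambient space M(3,R)^2 = mat3 \<times> mat3 the coordinates are exactly the
  18 matrix entries.\<close>

inductive_set polyfun :: "('a::euclidean_space \<Rightarrow> real) set" where
  const: "(\<lambda>x. c) \<in> polyfun"
| coord: "b \<in> Basis \<Longrightarrow> (\<lambda>x. inner x b) \<in> polyfun"
| add: "p \<in> polyfun \<Longrightarrow> q \<in> polyfun \<Longrightarrow> (\<lambda>x. p x + q x) \<in> polyfun"
| mult: "p \<in> polyfun \<Longrightarrow> q \<in> polyfun \<Longrightarrow> (\<lambda>x. p x * q x) \<in> polyfun"

text \<open>Nonsingular (smooth) point of a real algebraic set V, following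
  Bochnak--Coste--Roy, Def. 3.3.9: there are polynomials P_0,...,P_{k-1} in the
  ideal I(V) of polynomials vanishing on V whose differentials at x are linearly
  independent (Jacobian of rank k), and a Zariski open neighbourhood
  {Q \<noteq> 0} of x on which V coincides with the common zero set of the P_i.
  (Then x is nonsingular in dimension n - k.)\<close>

definition smooth_point :: "'a::euclidean_space set \<Rightarrow> 'a \<Rightarrow> bool" where
  "smooth_point V x \<longleftrightarrow> x \<in> V \<and>
     (\<exists>(k::nat) P D Q.
        (\<forall>i<k. P i \<in> polyfun \<and> (\<forall>y\<in>V. P i y = 0) \<and> (P i has_derivative D i) (at x)) \<and>
        (\<forall>c::nat \<Rightarrow> real. (\<forall>v. (\<Sum>i<k. c i * D i v) = 0) \<longrightarrow> (\<forall>i<k. c i = 0)) \<and>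
        Q \<in> polyfun \<and> Q x \<noteq> 0 \<and>
        (\<forall>y. Q y \<noteq> 0 \<longrightarrow> (y \<in> V \<longleftrightarrow> (\<forall>i<k. P i y = 0))))"

definition HomGamma :: "(mat3 \<times> mat3) set" where
  "HomGamma = {(A, B). det A = 1 \<and> det B = 1 \<and> A ** A ** A = mat 1 \<and> B ** B ** B = mat 1}"

definition piSL :: "mat3 \<Rightarrow> mat3" where
  "piSL M = (1 / root 3 (det M)) *\<^sub>R M"

definition mk3 :: "real \<Rightarrow> real \<Rightarrow> real \<Rightarrow> real \<Rightarrow> real \<Rightarrow> real \<Rightarrow> real \<Rightarrow> real \<Rightarrow> real \<Rightarrow> mat3" where
  "mk3 a11 a12 a13 a21 a22 a23 a31 a32 a33 =
     vector [vector [a11, a12, a13], vector [a21, a22, a23], vector [a31, a32, a33]]"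

definition A_Theta :: "real \<Rightarrow> real \<Rightarrow> mat3" where
  "A_Theta zt zb = mk3
     (zt*zb - 1) (zt*(1 - zt*zb)) (zb - zt)
     (zb - zt) (1 - zt*zb) (zt*zb - 1)
     0 (1 - zt^2) 0"

definition D_Theta :: "real \<Rightarrow> real \<Rightarrow> mat3" where
  "D_Theta zt zb = mk3
     1 (-zt) (-zb)
     (-zt) 1 (zt*zb)
     (-zb) (zt*zb) 1"

definition Sigma :: "real \<Rightarrow> real \<Rightarrow> mat3" where
  "Sigma eps del = mk3
     1 0 0
     0 (exp (-del) * cosh eps) (- sinh eps)
     0 (- sinh eps) (exp del * cosh eps)"

definition B_Theta :: "real \<Rightarrow> real \<Rightarrow> real \<Rightarrow> real \<Rightarrow> mat3" where
  "B_Theta eps del zt zb =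
     matrix_inv (Sigma eps del) ** matrix_inv (D_Theta zt zb) **
     matrix_inv (transpose (A_Theta zt zb)) ** D_Theta zt zb ** Sigma eps del"

definition f_R :: "real \<Rightarrow> real \<Rightarrow> real" where
  "f_R eps del = exp (-del) * cosh eps - sinh eps - 1"

definition regionR :: "(real \<times> real) set" where
  "regionR = {(eps, del). f_R eps del \<ge> 0 \<and> f_R eps (-del) \<ge> 0}"

end

theory Submission
  imports Defs
begin


definition trc :: "mat3 \<Rightarrow> real" where "trc M = M$1$1 + M$2$2 + M$3$3"
definition s2 :: "mat3 \<Rightarrow> real" where
 "s2 M = M$1$1*M$2$2 - M$1$2*M$2$1 + M$1$1*M$3$3 - M$1$3*M$3$1 + M$2$2*M$3$3 - M$2$3*M$3$2"

lemma mk3_nth[simp]: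
  "mk3 a b c d e f g h i $ 1 $ 1 = a" "mk3 a b c d e f g h i $ 1 $ 2 = b" "mk3 a b c d e f g h i $ 1 $ 3 = c"
  "mk3 a b c d e f g h i $ 2 $ 1 = d" "mk3 a b c d e f g h i $ 2 $ 2 = e" "mk3 a b c d e f g h i $ 2 $ 3 = f"
  "mk3 a b c d e f g h i $ 3 $ 1 = g" "mk3 a b c d e f g h i $ 3 $ 2 = h" "mk3 a b c d e f g h i $ 3 $ 3 = i"
  by (simp_all add: mk3_def vector_3)

lemma mm3: "((A::mat3) ** B) $ i $ j = A$i$1*B$1$j + A$i$2*B$2$j + A$i$3*B$3$j"
  by (simp add: matrix_matrix_mult_def sum_3)

lemma mat_eq3: "(A::mat3) = B \<longleftrightarrow> (\<forall>i j. A$i$j = B$i$j)"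
  by (simp add: vec_eq_iff)

lemma CH: "(A::mat3) ** A ** A = trc A *\<^sub>R (A ** A) - s2 A *\<^sub>R A + det A *\<^sub>R mat 1"
  by (simp add: mat_eq3 forall_3 mm3 trc_def s2_def det_3 mat_def algebra_simps)

lemma tr_sq: "trc ((A::mat3) ** A) = trc A ^ 2 - 2 * s2 A"
  by (simp add: trc_def s2_def mm3 algebra_simps power2_eq_square)

lemma tr_comm: "trc ((A::mat3) ** B) = trc (B ** A)"
  by (simp add: trc_def mm3 algebra_simps)

lemma tr_scale: "trc (c *\<^sub>R A) = c * trc A" by (simp add: trc_def algebra_simps)
lemma s2_scale: "s2 (c *\<^sub>R A) = c^2 * s2 A" by (simp add: s2_def algebra_simps power2_eq_square)
lemma det_scale: "det (c *\<^sub>R (A::mat3)) = c^3 * det A" by (simp add: det_3 algebra_simps power3_eq_cube)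
lemma tr_transp: "trc (transpose A) = trc A" by (simp add: trc_def transpose_def)
lemma tr_add: "trc (A - B) = trc A - trc B" "trc (A + B) = trc A + trc B" by (simp_all add: trc_def)
lemma tr_mat: "trc (mat c) = 3*c" by (simp add: trc_def mat_def)

lemma minv: "invertible (A::mat3) \<Longrightarrow> A ** matrix_inv A = mat 1 \<and> matrix_inv A ** A = mat 1"
  unfolding invertible_def matrix_inv_def by (rule someI_ex)

lemma det_I3: "det (mat 1 :: mat3) = 1" by (simp add: det_3 mat_def)

lemma piSL_good:
  assumes "trc M = 0" "s2 M = 0" "det M \<noteq> 0"
  shows "trc (piSL M) = 0" "s2 (piSL M) = 0" "det (piSL M) = 1"
proof -
  have r: "root 3 (det M) ^ 3 = det M" by (simp add: odd_real_root_pow)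
  hence "root 3 (det M) \<noteq> 0" using assms(3) by auto
  show "trc (piSL M) = 0" "s2 (piSL M) = 0" using assms by (simp_all add: piSL_def tr_scale s2_scale)
  show "det (piSL M) = 1" using assms(3) r by (simp add: piSL_def det_scale power_divide)
qed

lemma A_facts:
  assumes "zt \<in> {-1<..<1}" "zb \<in> {-1<..<1}"
  shows "trc (A_Theta zt zb) = 0" "s2 (A_Theta zt zb) = 0" "det (A_Theta zt zb) \<noteq> 0"
proof -
  show "trc (A_Theta zt zb) = 0" "s2 (A_Theta zt zb) = 0"
    by (simp_all add: A_Theta_def trc_def s2_def algebra_simps power2_eq_square)
  have "det (A_Theta zt zb) = - ((1 - zt^2)^2 * (1 - zb^2))"
    by (simp add: A_Theta_def det_3 algebra_simps power2_eq_square)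
  moreover have "1 - zt^2 > 0" "1 - zb^2 > 0" using assms by (auto simp: abs_square_less_1)
  ultimately show "det (A_Theta zt zb) \<noteq> 0" by simp
qed

lemma inv_facts:
  fixes A :: mat3
  assumes "trc A = 0" "s2 A = 0" "det A \<noteq> 0"
  defines "N \<equiv> matrix_inv (transpose A)"
  shows "trc N = 0" "s2 N = 0" "det N \<noteq> 0"
proof -
  let ?d = "det A"
  have A3: "A ** A ** A = ?d *\<^sub>R mat 1" using CH[of A] assms by simp
  define Ai where "Ai = (1 / ?d) *\<^sub>R (A ** A)"
  have "Ai ** A = mat 1" unfolding Ai_def
    by (simp add: scalar_matrix_assoc[symmetric] A3 assms(3))
  hence tAi: "transpose A ** transpose Ai = mat 1" by (metis matrix_transpose_mul transpose_mat)
  have invA: "invertible (transpose A)" using assms(3) by (simp add: invertible_det_nz)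
  have "N = N ** (transpose A ** transpose Ai)" by (simp add: tAi)
  also have "\<dots> = transpose Ai" by (simp add: matrix_mul_assoc N_def minv[OF invA])
  finally have N: "N = transpose Ai" .
  have trA2: "trc (A ** A) = 0" using tr_sq[of A] assms by simp
  show t0: "trc N = 0" using trA2 by (simp add: N tr_transp Ai_def tr_scale)
  have "trc (A ** A ** (A ** A)) = trc (A ** A ** A ** A)" by (simp add: matrix_mul_assoc)
  also have "\<dots> = 0" by (simp add: A3 scalar_matrix_assoc[symmetric] tr_scale assms)
  finally have "trc (Ai ** Ai) = 0" unfolding Ai_def
    by (simp add: scalar_matrix_assoc[symmetric] matrix_scalar_ac tr_scale)
  hence "trc (N ** N) = 0" by (simp add: N matrix_transpose_mul[symmetric] tr_transp)
  thus "s2 N = 0" using tr_sq[of N] t0 by simp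
  have "det N * det (transpose A) = 1"
    using minv[OF invA] det_mul[of N "transpose A"] det_I3 unfolding N_def by simp
  thus "det N \<noteq> 0" by auto
qed

lemma conj_facts:
  fixes X M P :: mat3
  assumes "X ** P = mat 1" "P ** X = mat 1"
  shows "trc (X ** M ** P) = trc M" "s2 (X ** M ** P) = s2 M" "det (X ** M ** P) = det M"
proof -
  have "trc (X ** M ** P) = trc (P ** (X ** M))" by (rule tr_comm)
  also have "\<dots> = trc M" by (simp add: matrix_mul_assoc assms)
  finally show t: "trc (X ** M ** P) = trc M" .
  have "(X ** M ** P) ** (X ** M ** P) = X ** (M ** M) ** P"
    by (metis (no_types, lifting) assms(2) matrix_mul_assoc matrix_mul_rid)
  hence "trc ((X ** M ** P) ** (X ** M ** P)) = trc (M ** M)"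
    using tr_comm[of "X ** (M**M)" P] by (simp add: matrix_mul_assoc assms)
  thus "s2 (X ** M ** P) = s2 M" using tr_sq[of M] tr_sq[of "X ** M ** P"] t by simp
  have "det X * det P = 1" using det_mul[of X P] assms det_I3 by simp
  thus "det (X ** M ** P) = det M" by (simp add: det_mul)
qed

lemma B_facts:
  assumes "zt \<in> {-1<..<1}" "zb \<in> {-1<..<1}"
  shows "trc (B_Theta e d zt zb) = 0" "s2 (B_Theta e d zt zb) = 0" "det (B_Theta e d zt zb) \<noteq> 0"
proof -
  let ?S = "Sigma e d" and ?D = "D_Theta zt zb"
  have "det ?S = exp (-d) * exp d * cosh e ^ 2 - sinh e ^ 2"
    by (simp add: Sigma_def det_3 algebra_simps power2_eq_square)
  also have "\<dots> = 1" by (simp add: exp_minus hyperbolic_pythagoras)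
  finally have iS: "invertible ?S" by (simp add: invertible_det_nz)
  have "det ?D = (1 - zt^2) * (1 - zb^2)"
    by (simp add: D_Theta_def det_3 algebra_simps power2_eq_square)
  moreover have "1 - zt^2 > 0" "1 - zb^2 > 0" using assms by (auto simp: abs_square_less_1)
  ultimately have iD: "invertible ?D" by (simp add: invertible_det_nz)
  let ?X = "matrix_inv ?S ** matrix_inv ?D" and ?P = "?D ** ?S"
  have e: "B_Theta e d zt zb = ?X ** matrix_inv (transpose (A_Theta zt zb)) ** ?P"
    unfolding B_Theta_def by (simp add: matrix_mul_assoc)
  have 1: "?X ** ?P = mat 1"
    by (metis (no_types, lifting) iD iS matrix_mul_assoc matrix_mul_rid minv)
  have 2: "?P ** ?X = mat 1"
    by (metis (no_types, lifting) iD iS matrix_mul_assoc matrix_mul_rid minv)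
  note AF = A_facts[OF assms]
  show "trc (B_Theta e d zt zb) = 0" "s2 (B_Theta e d zt zb) = 0" "det (B_Theta e d zt zb) \<noteq> 0"
    unfolding e conj_facts[OF 1 2] using inv_facts[OF AF] by auto
qed

definition ds2 :: "mat3 \<Rightarrow> mat3 \<Rightarrow> real" where
 "ds2 A H = H$1$1*A$2$2 + A$1$1*H$2$2 - H$1$2*A$2$1 - A$1$2*H$2$1 + H$1$1*A$3$3 + A$1$1*H$3$3
   - H$1$3*A$3$1 - A$1$3*H$3$1 + H$2$2*A$3$3 + A$2$2*H$3$3 - H$2$3*A$3$2 - A$2$3*H$3$2"
definition ddet :: "mat3 \<Rightarrow> mat3 \<Rightarrow> real" where
 "ddet A H = H$1$1*A$2$2*A$3$3 + A$1$1*H$2$2*A$3$3 + A$1$1*A$2$2*H$3$3 + H$1$2*A$2$3*A$3$1 + A$1$2*H$2$3*A$3$1 + A$1$2*A$2$3*H$3$1 + H$1$3*A$2$1*A$3$2 + A$1$3*H$2$1*A$3$2 + A$1$3*A$2$1*H$3$2 - H$1$1*A$2$3*A$3$2 - A$1$1*H$2$3*A$3$2 - A$1$1*A$2$3*H$3$2 - H$1$2*A$2$1*A$3$3 - A$1$2*H$2$1*A$3$3 - A$1$2*A$2$1*H$3$3 - H$1$3*A$2$2*A$3$1 - A$1$3*H$2$2*A$3$1 - A$1$3*A$2$2*H$3$1"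

lemma ds2_vals: "ds2 A (mat 1) = 2 * trc A" "ds2 A A = 2 * s2 A"
  "ds2 A (A ** A) = trc A * trc (A ** A) - trc (A ** A ** A)" "ds2 A 0 = 0"
  by (simp_all add: ds2_def trc_def s2_def mm3 mat_def algebra_simps)

lemma ddet_vals: "ddet A (mat 1) = s2 A" "ddet A A = 3 * det A"
  "ddet A (A ** A) = det A * trc A" "ddet A 0 = 0"
  by (simp_all add: ddet_def trc_def s2_def det_3 mm3 mat_def algebra_simps)

lemma comp_iff:
  fixes A :: mat3
  assumes t3: "trc A \<noteq> 3"
  shows "(det A = 1 \<and> A ** A ** A = mat 1) \<longleftrightarrow>
         (trc A * (trc A - 3) = 0 \<and> s2 A * (trc A - 3) = 0 \<and> det A - 1 = 0)"
proof
  assume h: "det A = 1 \<and> A ** A ** A = mat 1"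
  let ?t = "trc A" and ?s = "s2 A"
  have "mat 1 = ?t *\<^sub>R (A ** A) - ?s *\<^sub>R A + mat 1" using CH[of A] h by simp
  hence E: "?t *\<^sub>R (A ** A) = ?s *\<^sub>R A" by (simp add: algebra_simps)
  hence "(?t *\<^sub>R (A ** A)) ** A = (?s *\<^sub>R A) ** A" by simp
  hence E2: "?t *\<^sub>R mat 1 = ?s *\<^sub>R (A ** A)" using h by (simp add: scalar_matrix_assoc[symmetric])
  hence "(?t *\<^sub>R mat 1) ** A = (?s *\<^sub>R (A ** A)) ** A" by simp
  hence E3: "?t *\<^sub>R A = ?s *\<^sub>R mat 1" using h by (simp add: scalar_matrix_assoc[symmetric])
  have 1: "3 * ?t = ?s * (?t^2 - 2 * ?s)"
    using arg_cong[OF E2, of trc] by (simp add: tr_scale tr_mat tr_sq)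
  have 2: "?t * ?t = 3 * ?s"
    using arg_cong[OF E3, of trc] by (simp add: tr_scale tr_mat)
  have "?t * (?t - 3) * (?t^2 + 3 * ?t + 9) = 0"
  proof -
    have "?s * ?s = 3 * ?t" using 1 2 by (simp add: power2_eq_square algebra_simps)
    moreover have "(?t * ?t) * (?t * ?t) = 9 * (?s * ?s)" using 2 by simp
    ultimately have "(?t * ?t) * (?t * ?t) = 27 * ?t" by simp
    thus ?thesis by (simp add: algebra_simps power2_eq_square)
  qed
  moreover have "?t^2 + 3 * ?t + 9 > 0"
  proof -
    have "(?t + 3/2)^2 \<ge> 0" by simp
    thus ?thesis by (simp add: power2_eq_square algebra_simps)
  qed
  ultimately have "?t = 0" using t3 by auto
  thus "?t * (?t - 3) = 0 \<and> ?s * (?t - 3) = 0 \<and> det A - 1 = 0" using 2 h by auto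
next
  assume h: "trc A * (trc A - 3) = 0 \<and> s2 A * (trc A - 3) = 0 \<and> det A - 1 = 0"
  hence "trc A = 0" "s2 A = 0" "det A = 1" using t3 by auto
  thus "det A = 1 \<and> A ** A ** A = mat 1" using CH[of A] by simp
qed

lemma hd_ef: "((\<lambda>x::mat3\<times>mat3. fst x $ i $ j) has_derivative (\<lambda>h. fst h $ i $ j)) F"
  by (intro bounded_linear.has_derivative[OF bounded_linear_vec_nth] bounded_linear.has_derivative[OF bounded_linear_fst] has_derivative_ident)

lemma hd_es: "((\<lambda>x::mat3\<times>mat3. snd x $ i $ j) has_derivative (\<lambda>h. snd h $ i $ j)) F"
  by (intro bounded_linear.has_derivative[OF bounded_linear_vec_nth] bounded_linear.has_derivative[OF bounded_linear_snd] has_derivative_ident)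

lemmas hd_rules = has_derivative_add has_derivative_diff has_derivative_mult has_derivative_const hd_ef hd_es

lemma hd_0: "((\<lambda>x::mat3\<times>mat3. trc (fst x)) has_derivative (\<lambda>h. trc (fst h))) (at x0)"
  unfolding trc_def s2_def det_3
  by (rule has_derivative_eq_rhs, (rule hd_rules)+, simp add: ds2_def ddet_def algebra_simps fun_eq_iff)

lemma hd_1: "((\<lambda>x::mat3\<times>mat3. s2 (fst x)) has_derivative (\<lambda>h. ds2 (fst x0) (fst h))) (at x0)"
  unfolding trc_def s2_def det_3
  by (rule has_derivative_eq_rhs, (rule hd_rules)+, simp add: ds2_def ddet_def algebra_simps fun_eq_iff)

lemma hd_2: "((\<lambda>x::mat3\<times>mat3. det (fst x)) has_derivative (\<lambda>h. ddet (fst x0) (fst h))) (at x0)"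
  unfolding trc_def s2_def det_3
  by (rule has_derivative_eq_rhs, (rule hd_rules)+, simp add: ds2_def ddet_def algebra_simps fun_eq_iff)

lemma hd_3: "((\<lambda>x::mat3\<times>mat3. trc (snd x)) has_derivative (\<lambda>h. trc (snd h))) (at x0)"
  unfolding trc_def s2_def det_3
  by (rule has_derivative_eq_rhs, (rule hd_rules)+, simp add: ds2_def ddet_def algebra_simps fun_eq_iff)

lemma hd_4: "((\<lambda>x::mat3\<times>mat3. s2 (snd x)) has_derivative (\<lambda>h. ds2 (snd x0) (snd h))) (at x0)"
  unfolding trc_def s2_def det_3
  by (rule has_derivative_eq_rhs, (rule hd_rules)+, simp add: ds2_def ddet_def algebra_simps fun_eq_iff)

lemma hd_5: "((\<lambda>x::mat3\<times>mat3. det (snd x)) has_derivative (\<lambda>h. ddet (snd x0) (snd h))) (at x0)"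
  unfolding trc_def s2_def det_3
  by (rule has_derivative_eq_rhs, (rule hd_rules)+, simp add: ds2_def ddet_def algebra_simps fun_eq_iff)


lemma pf_diff: "p \<in> polyfun \<Longrightarrow> q \<in> polyfun \<Longrightarrow> (\<lambda>x. p x - q x) \<in> polyfun"
proof -
  assume "p \<in> polyfun" "q \<in> polyfun"
  hence "(\<lambda>x. p x + (\<lambda>x. -1) x * q x) \<in> polyfun" by (intro polyfun.intros)
  thus ?thesis by simp
qed

lemma pf_ef: "(\<lambda>x::mat3\<times>mat3. fst x $ i $ j) \<in> polyfun"
proof -
  have "(axis i (axis j 1), 0) \<in> (Basis :: (mat3\<times>mat3) set)"
    by (auto simp: Basis_prod_def Basis_vec_def)
  hence "(\<lambda>x::mat3\<times>mat3. inner x (axis i (axis j 1), 0)) \<in> polyfun" by (rule polyfun.coord)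
  moreover have "(\<lambda>x::mat3\<times>mat3. inner x (axis i (axis j 1), 0)) = (\<lambda>x. fst x $ i $ j)"
    by (auto simp: fun_eq_iff inner_Pair inner_axis)
  ultimately show ?thesis by simp
qed

lemma pf_es: "(\<lambda>x::mat3\<times>mat3. snd x $ i $ j) \<in> polyfun"
proof -
  have "axis i (axis j 1) \<in> (Basis :: mat3 set)"
    by (auto simp: Basis_vec_def)
  hence "(0, axis i (axis j 1)) \<in> (Basis :: (mat3\<times>mat3) set)"
    unfolding Basis_prod_def by blast
  hence "(\<lambda>x::mat3\<times>mat3. inner x (0, axis i (axis j 1))) \<in> polyfun" by (rule polyfun.coord)
  moreover have "(\<lambda>x::mat3\<times>mat3. inner x (0, axis i (axis j 1))) = (\<lambda>x. snd x $ i $ j)"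
    by (auto simp: fun_eq_iff inner_Pair inner_axis)
  ultimately show ?thesis by simp
qed

lemmas pf_rules = polyfun.const polyfun.add polyfun.mult pf_diff pf_ef pf_es

lemma pf_0: "(\<lambda>x::mat3\<times>mat3. trc (fst x) * (trc (fst x) - 3)) \<in> polyfun"
  unfolding trc_def s2_def det_3 by (intro pf_rules)+

lemma pf_1: "(\<lambda>x::mat3\<times>mat3. s2 (fst x) * (trc (fst x) - 3)) \<in> polyfun"
  unfolding trc_def s2_def det_3 by (intro pf_rules)+

lemma pf_2: "(\<lambda>x::mat3\<times>mat3. det (fst x) - 1) \<in> polyfun"
  unfolding trc_def s2_def det_3 by (intro pf_rules)+

lemma pf_3: "(\<lambda>x::mat3\<times>mat3. trc (snd x) * (trc (snd x) - 3)) \<in> polyfun"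
  unfolding trc_def s2_def det_3 by (intro pf_rules)+

lemma pf_4: "(\<lambda>x::mat3\<times>mat3. s2 (snd x) * (trc (snd x) - 3)) \<in> polyfun"
  unfolding trc_def s2_def det_3 by (intro pf_rules)+

lemma pf_5: "(\<lambda>x::mat3\<times>mat3. det (snd x) - 1) \<in> polyfun"
  unfolding trc_def s2_def det_3 by (intro pf_rules)+

lemma pf_6: "(\<lambda>x::mat3\<times>mat3. (trc (fst x) - 3) * (trc (snd x) - 3)) \<in> polyfun"
  unfolding trc_def s2_def det_3 by (intro pf_rules)+




lemma all6: "(\<forall>i<(6::nat). R i) \<longleftrightarrow> R 0 \<and> R 1 \<and> R 2 \<and> R 3 \<and> R 4 \<and> R 5"
proof
  assume "R 0 \<and> R 1 \<and> R 2 \<and> R 3 \<and> R 4 \<and> R 5"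
  moreover have "\<And>i::nat. i < 6 \<Longrightarrow> i = 0 \<or> i = 1 \<or> i = 2 \<or> i = 3 \<or> i = 4 \<or> i = 5" by arith
  ultimately show "\<forall>i<(6::nat). R i" by auto
qed auto

lemma sum6: "(\<Sum>i<(6::nat). f i) = f 0 + f 1 + f 2 + f 3 + f 4 + f 5"
  by (simp add: eval_nat_numeral)

lemma trc0: "trc 0 = 0" by (simp add: trc_def)

lemma vanish: "det (A::mat3) = 1 \<and> A ** A ** A = mat 1 \<Longrightarrow>
   trc A * (trc A - 3) = 0 \<and> s2 A * (trc A - 3) = 0 \<and> det A - 1 = 0"
  using comp_iff[of A] by (cases "trc A = 3") auto

lemma HomGamma_iff: "(A, B) \<in> HomGamma \<longleftrightarrow> (det A = 1 \<and> A ** A ** A = mat 1) \<and> (det B = 1 \<and> B ** B ** B = mat 1)"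
  unfolding HomGamma_def by (rule iffI) auto

theorem lemma11p2:
  fixes eps del zt zb :: real
  assumes "(eps, del) \<in> regionR"
    and "zt \<in> {-1<..<1}" and "zb \<in> {-1<..<1}"
  shows "smooth_point HomGamma (piSL (A_Theta zt zb), piSL (B_Theta eps del zt zb))"
proof -
  define A0 where "A0 = piSL (A_Theta zt zb)"
  define B0 where "B0 = piSL (B_Theta eps del zt zb)"
  note a = piSL_good[OF A_facts[OF assms(2,3)], folded A0_def]
  note b = piSL_good[OF B_facts[where e=eps and d=del, OF assms(2,3)], folded B0_def]
  have A3: "A0 ** A0 ** A0 = mat 1" using CH[of A0] a by simp
  have B3: "B0 ** B0 ** B0 = mat 1" using CH[of B0] b by simp
  have trA2: "trc (A0 ** A0) = 0" using tr_sq[of A0] a by simp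
  have trB2: "trc (B0 ** B0) = 0" using tr_sq[of B0] b by simp
  have mem: "(A0, B0) \<in> HomGamma" unfolding HomGamma_iff using a(3) b(3) A3 B3 by blast
  define P :: "nat \<Rightarrow> mat3 \<times> mat3 \<Rightarrow> real" where "P i = (if i = 0 then (\<lambda>x. trc (fst x) * (trc (fst x) - 3))
     else if i = 1 then (\<lambda>x. s2 (fst x) * (trc (fst x) - 3))
     else if i = 2 then (\<lambda>x. det (fst x) - 1)
     else if i = 3 then (\<lambda>x. trc (snd x) * (trc (snd x) - 3))
     else if i = 4 then (\<lambda>x. s2 (snd x) * (trc (snd x) - 3))
     else (\<lambda>x. det (snd x) - 1))" for i
  define D :: "nat \<Rightarrow> mat3 \<times> mat3 \<Rightarrow> real" where "D i = (if i = 0 then (\<lambda>h. -3 * trc (fst h))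
     else if i = 1 then (\<lambda>h. -3 * ds2 A0 (fst h))
     else if i = 2 then (\<lambda>h. ddet A0 (fst h))
     else if i = 3 then (\<lambda>h. -3 * trc (snd h))
     else if i = 4 then (\<lambda>h. -3 * ds2 B0 (snd h))
     else (\<lambda>h. ddet B0 (snd h)))" for i
  define Q :: "mat3 \<times> mat3 \<Rightarrow> real" where "Q = (\<lambda>x. (trc (fst x) - 3) * (trc (snd x) - 3))"
  have c1a: "P 0 \<in> polyfun" "P 1 \<in> polyfun" "P 2 \<in> polyfun" "P 3 \<in> polyfun" "P 4 \<in> polyfun" "P 5 \<in> polyfun"
      by (simp_all add: P_def pf_0 pf_1 pf_2 pf_3 pf_4 pf_5)
  have c1b: "\<forall>i<6. \<forall>y\<in>HomGamma. P i y = 0"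
    proof -
      { fix y assume "y \<in> HomGamma"
        then obtain A B where y: "y = (A, B)" and "(det A = 1 \<and> A ** A ** A = mat 1)" "(det B = 1 \<and> B ** B ** B = mat 1)"
          by (metis HomGamma_iff prod.exhaust)
        hence "\<forall>i<6. P i y = 0" using vanish[of A] vanish[of B] unfolding all6 y P_def by simp }
      thus ?thesis by blast
    qed
  have "((\<lambda>x. trc (fst x) * (trc (fst x) - 3)) has_derivative (\<lambda>h. - 3 * trc (fst h))) (at (A0, B0))"
    by (rule has_derivative_eq_rhs, (rule hd_rules hd_0 hd_1 hd_2 hd_3 hd_4 hd_5)+, simp add: fun_eq_iff a b)
  hence c1c0: "(P 0 has_derivative D 0) (at (A0, B0))" by (simp add: P_def D_def)
  have "((\<lambda>x. s2 (fst x) * (trc (fst x) - 3)) has_derivative (\<lambda>h. - 3 * ds2 A0 (fst h))) (at (A0, B0))"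
    by (rule has_derivative_eq_rhs, (rule hd_rules hd_0 hd_1 hd_2 hd_3 hd_4 hd_5)+, simp add: fun_eq_iff a b)
  hence c1c1: "(P 1 has_derivative D 1) (at (A0, B0))" by (simp add: P_def D_def)
  have "((\<lambda>x. det (fst x) - 1) has_derivative (\<lambda>h. ddet A0 (fst h))) (at (A0, B0))"
    by (rule has_derivative_eq_rhs, (rule hd_rules hd_0 hd_1 hd_2 hd_3 hd_4 hd_5)+, simp add: fun_eq_iff a b)
  hence c1c2: "(P 2 has_derivative D 2) (at (A0, B0))" by (simp add: P_def D_def)
  have "((\<lambda>x. trc (snd x) * (trc (snd x) - 3)) has_derivative (\<lambda>h. - 3 * trc (snd h))) (at (A0, B0))"
    by (rule has_derivative_eq_rhs, (rule hd_rules hd_0 hd_1 hd_2 hd_3 hd_4 hd_5)+, simp add: fun_eq_iff a b)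
  hence c1c3: "(P 3 has_derivative D 3) (at (A0, B0))" by (simp add: P_def D_def)
  have "((\<lambda>x. s2 (snd x) * (trc (snd x) - 3)) has_derivative (\<lambda>h. - 3 * ds2 B0 (snd h))) (at (A0, B0))"
    by (rule has_derivative_eq_rhs, (rule hd_rules hd_0 hd_1 hd_2 hd_3 hd_4 hd_5)+, simp add: fun_eq_iff a b)
  hence c1c4: "(P 4 has_derivative D 4) (at (A0, B0))" by (simp add: P_def D_def)
  have "((\<lambda>x. det (snd x) - 1) has_derivative (\<lambda>h. ddet B0 (snd h))) (at (A0, B0))"
    by (rule has_derivative_eq_rhs, (rule hd_rules hd_0 hd_1 hd_2 hd_3 hd_4 hd_5)+, simp add: fun_eq_iff a b)
  hence c1c5: "(P 5 has_derivative D 5) (at (A0, B0))" by (simp add: P_def D_def)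
  note c1c = c1c0 c1c1 c1c2 c1c3 c1c4 c1c5
  have c1: "\<forall>i<6. P i \<in> polyfun \<and> (\<forall>y\<in>HomGamma. P i y = 0) \<and> (P i has_derivative D i) (at (A0, B0))"
    using c1a c1b c1c unfolding all6 by blast
  have c2: "\<forall>c::nat \<Rightarrow> real. (\<forall>v. (\<Sum>i<6. c i * D i v) = 0) \<longrightarrow> (\<forall>i<6. c i = 0)"
  proof (rule allI, rule impI)
    fix c :: "nat \<Rightarrow> real"
    assume H: "\<forall>v. (\<Sum>i<6. c i * D i v) = 0"
    have "c 0 = 0" using H[rule_format, of "(mat 1, 0)"] a
      by (simp add: sum6 D_def ds2_vals ddet_vals tr_mat trc0)
    moreover have "c 1 = 0" using H[rule_format, of "(A0 ** A0, 0)"] a trA2 A3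
      by (simp add: sum6 D_def ds2_vals ddet_vals tr_mat trc0)
    moreover have "c 2 = 0" using H[rule_format, of "(A0, 0)"] a
      by (simp add: sum6 D_def ds2_vals ddet_vals tr_mat trc0)
    moreover have "c 3 = 0" using H[rule_format, of "(0, mat 1)"] b
      by (simp add: sum6 D_def ds2_vals ddet_vals tr_mat trc0)
    moreover have "c 4 = 0" using H[rule_format, of "(0, B0 ** B0)"] b trB2 B3
      by (simp add: sum6 D_def ds2_vals ddet_vals tr_mat trc0)
    moreover have "c 5 = 0" using H[rule_format, of "(0, B0)"] b
      by (simp add: sum6 D_def ds2_vals ddet_vals tr_mat trc0)
    ultimately show "\<forall>i<6. c i = 0" unfolding all6 by blast
  qed
  have c3: "Q \<in> polyfun" unfolding Q_def by (rule pf_6)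
  have c4: "Q (A0, B0) \<noteq> 0" using a b by (simp add: Q_def)
  have c5: "\<forall>y. Q y \<noteq> 0 \<longrightarrow> (y \<in> HomGamma \<longleftrightarrow> (\<forall>i<6. P i y = 0))"
  proof (intro allI impI)
    fix y :: "mat3 \<times> mat3"
    assume "Q y \<noteq> 0"
    hence t: "trc (fst y) \<noteq> 3" "trc (snd y) \<noteq> 3" by (auto simp: Q_def)
    obtain A B where y: "y = (A, B)" by fastforce
    show "y \<in> HomGamma \<longleftrightarrow> (\<forall>i<6. P i y = 0)"
    proof -
      have "y \<in> HomGamma \<longleftrightarrow> (det A = 1 \<and> A ** A ** A = mat 1) \<and> (det B = 1 \<and> B ** B ** B = mat 1)"
        unfolding y HomGamma_iff ..
      also have "\<dots> \<longleftrightarrow> (\<forall>i<6. P i y = 0)"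
        unfolding comp_iff[of A, OF t(1)[unfolded y fst_conv]] comp_iff[of B, OF t(2)[unfolded y snd_conv]]
        unfolding all6 y P_def by simp
      finally show ?thesis .
    qed
  qed
  show ?thesis
    unfolding A0_def[symmetric] B0_def[symmetric] smooth_point_def
    apply (rule conjI[OF mem])
    apply (rule exI[of _ 6], rule exI[of _ P], rule exI[of _ D], rule exI[of _ Q])
    using c1 c2 c3 c4 c5 by blast
qed
end
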